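(* Let $S$ be a string of length $n$ over a totally ordered alphabet, let $i\in[1,n]$ and $j=\mathrm{nss}[i]\ne n+1$. If $\mathrm{llce}(i,j)> j-i$, then $\mathrm{llce}(i-(j-i),i)=\mathrm{llce}(i,j)-(j-i)$ and $\mathrm{nss}[i-(j-i)]=i$.
   Context: For $i\in[1,n+1]$, $S_i=S[i..n]$ ($S_{n+1}$ empty); $\prec$ is the induced lexicographical order. $\mathrm{nss}[i]=\min\{j \mid j=n+1 \text{ or } (j\in(i,n] \text{ and } S_i\succ S_j)\}$ for $i\in[1,n]$. $\mathrm{llce}(a,b)$ is the length of the longest common suffix of the prefixes $S[1..a]$ and $S[1..b]$. *)

theory Defs
  imports Main
begin

text \<open>Strings are lists; positions are 1-based. suf S i = S[i..n] (empty for i = n+1).\<close>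
definition suf :: "'a list \<Rightarrow> nat \<Rightarrow> 'a list" where
  "suf S i = drop (i - 1) S"

definition nss :: "'a::linorder list \<Rightarrow> nat \<Rightarrow> nat" where
  "nss S i = (LEAST j. j = length S + 1 \<or>
      (i < j \<and> j \<le> length S \<and> ord_class.lexordp (suf S j) (suf S i)))"

definition llce :: "'a list \<Rightarrow> nat \<Rightarrow> nat \<Rightarrow> nat" where
  "llce S a b = (GREATEST l. l \<le> a \<and> l \<le> b \<and>
      drop (a - l) (take a S) = drop (b - l) (take b S))"

end

theory Submission
  imports Defs
begin

lemma pre1: "v @ X = us @ b # ws \<Longrightarrow> length us < length v \<Longrightarrow> \<exists>v'. v = us @ b # v'"
proof -
  assume e: "v @ X = us @ b # ws" and l: "length us < length v"
  have "take (length us) v = us \<and> drop (length us) v @ X = b # ws"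
    using e l by (simp add: append_eq_append_conv_if)
  moreover have "drop (length us) v \<noteq> []" using l by simp
  ultimately obtain v' where "drop (length us) v = b # v'" by (cases "drop (length us) v") auto
  then show ?thesis using \<open>take (length us) v = us \<and> _\<close> by (metis append_take_drop_id)
qed
lemma pre2: "v @ X = us @ ws \<Longrightarrow> length v \<le> length us \<Longrightarrow> \<exists>us2. us = v @ us2"
proof -
  assume e: "v @ X = us @ ws" and l: "length v \<le> length us"
  have "v = take (length v) us" using e l by (simp add: append_eq_append_conv_if)
  then show ?thesis by (metis append_take_drop_id)
qed
lemma disj_syll: "P \<or> Q \<Longrightarrow> \<not> P \<Longrightarrow> Q" by blast
lemma key:
  fixes u X v :: "'a::linorder list"
  assumes lt: "ord_class.lexordp X (u@X)" and vne: "v \<noteq> []" and vl: "length v < length u"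
    and suf: "\<And>w. w \<noteq> [] \<Longrightarrow> length w < length u \<Longrightarrow> (\<exists>z. u = z @ w) \<Longrightarrow> \<not> ord_class.lexordp (w@X) (u@X)"
    and vs: "\<exists>z. u = z @ v"
  shows "\<not> ord_class.lexordp (v@u@X) (u@u@X)"
proof -
  have "\<not> ord_class.lexordp (v@X) (u@X)" using suf vne vl vs by blast
  moreover have "v@X \<noteq> u@X" using vl by (metis append_same_eq length_append nat_less_le)
  ultimately have "ord_class.lexordp (u@X) (v@X)" using lexordp_linear by blast
  then have D: "(\<exists>x vs. v@X = (u@X) @ x # vs) \<or> (\<exists>us a b vs ws. a < b \<and> u@X = us @ a # vs \<and> v@X = us @ b # ws)"
    by (simp add: lexordp_iff)
  have nA: "\<not> (\<exists>x vs. v@X = (u@X) @ x # vs)"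
  proof
    assume "\<exists>x vs. v@X = (u@X) @ x # vs"
    then obtain x vs where "v@X = (u@X) @ x # vs" by blast
    then have "length (v@X) > length (u@X)" by simp
    with vl show False by simp
  qed
  have "\<exists>us a b vs ws. a < b \<and> u@X = us @ a # vs \<and> v@X = us @ b # ws"
    by (rule disj_syll[OF D nA])
  then obtain us a b vs ws where ab: "a < b" and e1: "u@X = us @ a # vs" and e2: "v@X = us @ b # ws"
    by (elim exE conjE) (rule that)
  show ?thesis
  proof (cases "length us < length v")
    case True
    then obtain v' where v': "v = us @ b # v'" using pre1[OF e2 True] by blast
    have "length us < length u" using True vl by simp
    then obtain u' where u': "u = us @ a # u'" using pre1[OF e1 \<open>length us < length u\<close>] by blast
    have "ord_class.lexordp (u@u@X) (v@u@X)" using ab u' v'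
      by (simp add: lexordp_append_left_rightI)
    then show ?thesis using lexordp_antisym by blast
  next
    case False
    then obtain us2 where us: "us = v @ us2" using pre2[OF e2] False by force
    from e2 us have X: "X = us2 @ b # ws" by simp
    have "take (length v) (u@X) = v" using e1 us False
      by (simp add: us)
    then have "take (length v) u = v" using vl by simp
    then obtain w where w: "u = v @ w" by (metis append_take_drop_id)
    have wne: "w \<noteq> []" using w vl by auto
    have wl: "length w < length u" using w vne by simp
    from e1 us w have wX: "w@X = us2 @ a # vs" by simp
    have "ord_class.lexordp (w@X) X" using wX X ab by (simp add: lexordp_append_left_rightI)
    moreover have "\<not> ord_class.lexordp (w@X) (u@X)" using suf wne wl w by blast
    moreover have "w@X \<noteq> u@X" using wl by (metis append_same_eq length_append nat_less_le)
    ultimately have "ord_class.lexordp (u@X) X"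
      using lexordp_linear lexordp_trans by blast
    then show ?thesis using lt lexordp_antisym by blast
  qed
qed

definition Qc :: "'a list \<Rightarrow> nat \<Rightarrow> nat \<Rightarrow> nat \<Rightarrow> bool" where
  "Qc S a b l \<longleftrightarrow> l \<le> a \<and> l \<le> b \<and> (\<forall>t<l. S!(a - Suc t) = S!(b - Suc t))"

lemma Qc_iff:
  assumes "a \<le> length S" "b \<le> length S"
  shows "(l \<le> a \<and> l \<le> b \<and> drop (a - l) (take a S) = drop (b - l) (take b S)) \<longleftrightarrow> Qc S a b l"
proof (cases "l \<le> a \<and> l \<le> b")
  case True
  have "drop (a - l) (take a S) = drop (b - l) (take b S) \<longleftrightarrow> (\<forall>s<l. S!(a - l + s) = S!(b - l + s))"
    using True assms by (auto simp add: list_eq_iff_nth_eq intro!: all_cong)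
  also have "\<dots> \<longleftrightarrow> (\<forall>t<l. S!(a - Suc t) = S!(b - Suc t))"
  proof
    assume h: "\<forall>s<l. S!(a - l + s) = S!(b - l + s)"
    show "\<forall>t<l. S!(a - Suc t) = S!(b - Suc t)"
    proof (intro allI impI)
      fix t assume "t < l"
      then have "l - Suc t < l" by simp
      then have "S!(a - l + (l - Suc t)) = S!(b - l + (l - Suc t))" using h by blast
      moreover have "a - l + (l - Suc t) = a - Suc t" "b - l + (l - Suc t) = b - Suc t"
        using \<open>t < l\<close> True by auto
      ultimately show "S!(a - Suc t) = S!(b - Suc t)" by simp
    qed
  next
    assume h: "\<forall>t<l. S!(a - Suc t) = S!(b - Suc t)"
    show "\<forall>s<l. S!(a - l + s) = S!(b - l + s)"
    proof (intro allI impI)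
      fix s assume "s < l"
      then have "l - Suc s < l" by simp
      then have "S!(a - Suc (l - Suc s)) = S!(b - Suc (l - Suc s))" using h by blast
      moreover have "a - Suc (l - Suc s) = a - l + s" "b - Suc (l - Suc s) = b - l + s"
        using \<open>s < l\<close> True by auto
      ultimately show "S!(a - l + s) = S!(b - l + s)" by simp
    qed
  qed
  finally show ?thesis using True by (simp add: Qc_def)
next
  case False
  then show ?thesis by (auto simp: Qc_def)
qed

lemma llce_Qc:
  assumes "a \<le> length S" "b \<le> length S"
  shows "llce S a b = (GREATEST l. Qc S a b l)"
  unfolding llce_def using Qc_iff[OF assms] by simp

lemma llce_Q:
  assumes "a \<le> length S" "b \<le> length S"
  shows "Qc S a b (llce S a b)"
  unfolding llce_Qc[OF assms]
  by (rule GreatestI_nat[where k=0 and b=a]) (auto simp: Qc_def)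

lemma llce_max:
  assumes "a \<le> length S" "b \<le> length S" "Qc S a b l"
  shows "l \<le> llce S a b"
  unfolding llce_Qc[OF assms(1,2)]
  by (rule Greatest_le_nat[where b=a]) (use assms(3) in \<open>auto simp: Qc_def\<close>)

lemma nss_props:
  fixes S :: "'a::linorder list"
  assumes "nss S i \<noteq> length S + 1"
  shows "i < nss S i \<and> nss S i \<le> length S \<and> ord_class.lexordp (suf S (nss S i)) (suf S i)"
proof -
  let ?P = "\<lambda>j. j = length S + 1 \<or> (i < j \<and> j \<le> length S \<and> ord_class.lexordp (suf S j) (suf S i))"
  have "?P (nss S i)" unfolding nss_def by (rule LeastI[where k="length S + 1"]) simp
  then show ?thesis using assms by blast
qed

lemma nss_min:
  fixes S :: "'a::linorder list"
  assumes "i < k" "k < nss S i" "k \<le> length S"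
  shows "\<not> ord_class.lexordp (suf S k) (suf S i)"
proof
  assume h: "ord_class.lexordp (suf S k) (suf S i)"
  let ?P = "\<lambda>j. j = length S + 1 \<or> (i < j \<and> j \<le> length S \<and> ord_class.lexordp (suf S j) (suf S i))"
  have "nss S i \<le> k" unfolding nss_def by (rule Least_le) (use assms h in blast)
  with assms show False by simp
qed

lemma suf_shift: "1 \<le> k \<Longrightarrow> drop m (suf S k) = suf S (k + m)"
  by (simp add: suf_def add.commute)

theorem lemma11:
  fixes S :: "'a::linorder list" and i j :: nat
  assumes "1 \<le> i" and "i \<le> length S"
    and "j = nss S i" and "j \<noteq> length S + 1"
    and "llce S i j > j - i"
  shows "llce S (i - (j - i)) i = llce S i j - (j - i) \<and> nss S (i - (j - i)) = i"
proof -
  define n where "n = length S"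
  define d where "d = j - i"
  define L where "L = llce S i j"
  define p where "p = i - d"
  have np: "i < j" "j \<le> n" "ord_class.lexordp (suf S j) (suf S i)"
    using nss_props[of S i] assms(3,4) unfolding n_def by auto
  have QL: "Qc S i j L" unfolding L_def by (rule llce_Q) (use np assms in \<open>auto simp: n_def\<close>)
  have Li: "L \<le> i" "L \<le> j" and Leq: "\<forall>t<L. S!(i - Suc t) = S!(j - Suc t)"
    using QL by (auto simp: Qc_def)
  have dL: "d < L" using assms(5) unfolding d_def L_def .
  have jd: "j = i + d" using np unfolding d_def by simp
  have pd: "p + d = i" "1 \<le> p" using dL Li unfolding p_def by auto
  have per: "S!x = S!(x + d)" if "i - L \<le> x" "x < i" for x
  proof -
    have "i - Suc x < L" using that dL by auto
    then have "S!(i - Suc (i - Suc x)) = S!(j - Suc (i - Suc x))" using Leq by blast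
    moreover have "i - Suc (i - Suc x) = x" "j - Suc (i - Suc x) = x + d" using that jd by auto
    ultimately show ?thesis by simp
  qed
  have in1: "p \<le> length S" "i \<le> length S" using pd assms(2) by auto
  have Q1: "Qc S p i (L - d)"
    unfolding Qc_def
  proof (intro conjI allI impI)
    show "L - d \<le> p" "L - d \<le> i" using Li pd by auto
    fix t assume "t < L - d"
    have "S!(p - Suc t) = S!(p - Suc t + d)" by (rule per) (use \<open>t < L - d\<close> pd Li in auto)
    moreover have "p - Suc t + d = i - Suc t" using \<open>t < L - d\<close> pd Li by auto
    ultimately show "S!(p - Suc t) = S!(i - Suc t)" by simp
  qed
  have Q1max: "l \<le> L - d" if "Qc S p i l" for l
  proof (rule ccontr)
    assume "\<not> l \<le> L - d"
    then have lt: "L - d < l" by simp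
    have lp: "l \<le> p" using that by (simp add: Qc_def)
    have "S!(p - Suc (L - d)) = S!(i - Suc (L - d))" using that lt by (simp add: Qc_def)
    moreover have "p - Suc (L - d) = i - Suc L" "i - Suc (L - d) = j - Suc L"
      using lt lp pd jd dL by auto
    ultimately have e: "S!(i - Suc L) = S!(j - Suc L)" by simp
    have "Qc S i j (Suc L)"
      unfolding Qc_def
    proof (intro conjI allI impI)
      show "Suc L \<le> i" "Suc L \<le> j" using lt lp pd jd dL by auto
      fix t assume "t < Suc L"
      then show "S!(i - Suc t) = S!(j - Suc t)" using Leq e by (cases "t = L") auto
    qed
    then have "Suc L \<le> L" unfolding L_def by (rule llce_max[rotated 2]) (use np assms in \<open>auto simp: n_def\<close>)
    then show False by simp
  qed
  have part1: "llce S p i = L - d"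
  proof (rule antisym)
    show "llce S p i \<le> L - d" by (rule Q1max, rule llce_Q[OF in1])
    show "L - d \<le> llce S p i" by (rule llce_max[OF in1 Q1])
  qed
  define u where "u = take d (suf S i)"
  define X where "X = suf S j"
  have lu: "length u = d" unfolding u_def suf_def using np jd n_def by auto
  have sufi: "suf S i = u @ X"
  proof -
    have "drop d (suf S i) = X" unfolding X_def using suf_shift[OF assms(1)] jd by simp
    then show ?thesis unfolding u_def by (metis append_take_drop_id)
  qed
  have sufp: "suf S p = u @ suf S i"
  proof -
    have dr: "drop d (suf S p) = suf S i" using suf_shift[OF pd(2), of d S] pd(1) by simp
    have "take d (suf S p) = u"
    proof (rule nth_equalityI)
      show "length (take d (suf S p)) = length u" using lu np jd pd n_def by (simp add: suf_def)
      fix s assume "s < length (take d (suf S p))"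
      then have s: "s < d" by simp
      have "take d (suf S p) ! s = S!(p - 1 + s)" using s np jd pd n_def by (simp add: suf_def)
      also have "\<dots> = S!(p - 1 + s + d)" by (rule per) (use s pd dL in auto)
      also have "p - 1 + s + d = i - 1 + s" using pd by simp
      also have "S!(i - 1 + s) = u ! s" unfolding u_def suf_def using s np jd pd n_def by simp
      finally show "take d (suf S p) ! s = u ! s" .
    qed
    then show ?thesis using dr by (metis append_take_drop_id)
  qed
  have ltX: "ord_class.lexordp X (u @ X)" using np sufi X_def by simp
  have sufhyp: "\<not> ord_class.lexordp (w @ X) (u @ X)"
    if wh: "w \<noteq> []" "length w < length u" "\<exists>z. u = z @ w" for w
  proof -
    obtain z where z: "u = z @ w" using wh(3) by blast
    have wd: "w = drop (d - length w) u" using z lu by simp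
    have "w @ X = drop (d - length w) (suf S i)" using wd sufi lu wh(2) by simp
    also have "\<dots> = suf S (j - length w)" using suf_shift[OF assms(1)] jd wh(2) lu
      by (metis add_diff_assoc less_imp_le_nat)
    finally have "w @ X = suf S (j - length w)" .
    moreover have "\<not> ord_class.lexordp (suf S (j - length w)) (suf S i)"
      by (rule nss_min) (use wh lu jd np assms(3) n_def in auto)
    ultimately show ?thesis using sufi by simp
  qed
  have notlt: "\<not> ord_class.lexordp (suf S k) (suf S p)" if "p < k" "k < i" for k
  proof -
    define m where "m = k - p"
    have m: "0 < m" "m < d" using that pd unfolding m_def by auto
    have "drop m (suf S p) = suf S (p + m)" by (rule suf_shift[OF pd(2)])
    moreover have "p + m = k" using that unfolding m_def by simp
    ultimately have "suf S k = drop m (suf S p)" by simp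
    also have "\<dots> = drop m u @ u @ X" using sufp sufi m lu by simp
    finally have sk: "suf S k = drop m u @ u @ X" .
    have "\<not> ord_class.lexordp (drop m u @ u @ X) (u @ u @ X)"
    proof (rule key[OF ltX])
      show "drop m u \<noteq> []" "length (drop m u) < length u" using m lu by auto
      show "\<exists>z. u = z @ drop m u" by (metis append_take_drop_id)
    qed (rule sufhyp)
    then show ?thesis using sk sufp sufi by simp
  qed
  have ltpi: "ord_class.lexordp (suf S i) (suf S p)"
    using sufp lexordp_append_leftI[OF ltX, of u] sufi by simp
  have part2: "nss S p = i"
    unfolding nss_def
  proof (rule Least_equality)
    show "i = length S + 1 \<or> p < i \<and> i \<le> length S \<and> ord_class.lexordp (suf S i) (suf S p)"
      using ltpi pd dL assms(2) np jd by auto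
    fix y assume "y = length S + 1 \<or> p < y \<and> y \<le> length S \<and> ord_class.lexordp (suf S y) (suf S p)"
    then show "i \<le> y"
    proof
      assume "y = length S + 1" then show ?thesis using assms(2) by simp
    next
      assume h: "p < y \<and> y \<le> length S \<and> ord_class.lexordp (suf S y) (suf S p)"
      show ?thesis
      proof (rule ccontr)
        assume "\<not> i \<le> y"
        then have "y < i" by simp
        with h notlt show False by blast
      qed
    qed
  qed
  show ?thesis using part1 part2 unfolding p_def d_def L_def by simp
qed

end
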